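(* Consider the stochastic tandem network TSC(St) described in the context, with $\rho^*=\lambda/\mu_{\min}<1$ and finite variances $\sigma_a^2,\sigma_{s,j}^2$. Let $$\Gamma=\max_j\Big(\sqrt{2}\sigma_a\Gamma_{a,\mathrm{LIL}},\ \sqrt{2}\sigma_{s,j}\Gamma_{s,j,\mathrm{LIL}},\ e^{2e}\lambda^{-1}\Big).$$ Then for every $n\ge 1$, $$\mathbb{E}[W_n]\le \mathbb{E}\Big[\frac{7J^2\Gamma^2\lambda}{1-\rho^*}\ln\ln\frac{J\lambda\Gamma}{1-\rho^*}\Big]+J\lambda^{-1}.$$ If moreover $\lim_{n\to\infty}\mathbb{E}[W_n]=\mathbb{E}[W_\infty]$, then the same upper bound holds for $\mathbb{E}[W_\infty]$.
   Context: $\phi(x)=\sqrt{x\ln\ln x}$ for $x\ge e^e$ and $\phi(x)=1$ otherwise. TSC(St): single-server stations $S_1,\dots,S_J$ in tandem, initially empty, infinite buffers, FIFO at each station; jobs arrive to $S_1$ with i.i.d. interarrival times $U_1,U_2,\dots$ (mean $\lambda^{-1}$, variance $\sigma_a^2$); job $k$ requires service $V^j_k$ at $S_j$, with $(V^j_k)_{k\ge1}$ i.i.d. (mean $\mu_j^{-1}$, variance $\sigma_{s,j}^2$), all sequences mutually independent; jobs visit $S_1,\dots,S_J$ in order. $\mu_{\min}=\min_j\mu_j$. $W_n$ is the sojourn time (arrival at $S_1$ to departure from $S_J$) of job $n$; $W_\infty$ is its steady-state version. For an i.i.d. zero-mean sequence $(X_k)$ with variance $\sigma^2$, its LIL constant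 is $\Gamma_{\mathrm{LIL}}=\sup_{m\ge1}\frac{|\sum_{k=1}^m X_k|}{\sigma\sqrt2\,\phi(m)}$ (finite a.s.); $\Gamma_{a,\mathrm{LIL}}$ and $\Gamma_{s,j,\mathrm{LIL}}$ are these constants for the centered sequences $U_k-\lambda^{-1}$ and $V^j_k-\mu_j^{-1}$ (in the paper, taken along the reversed order of the first $n$ jobs, which has the same distribution). *)

theory Defs
  imports "HOL-Probability.Probability"
begin

definition phi :: "real \<Rightarrow> real" where
  "phi x = (if x \<ge> exp (exp 1) then sqrt (x * ln (ln x)) else 1)"

text \<open>LIL constant of a (1-indexed) sequence X with standard deviation sigma:
  sup over m >= 1 of |X 1 + ... + X m| / (sigma sqrt 2 phi(m)), taken in ennreal
  (so it is always well defined; it is finite a.s. by the LIL).\<close>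
definition lil_const :: "(nat \<Rightarrow> real) \<Rightarrow> real \<Rightarrow> ennreal" where
  "lil_const X \<sigma> = (SUP m\<in>{1..}. ennreal (\<bar>\<Sum>k=1..m. X k\<bar> / (\<sigma> * sqrt 2 * phi (real m))))"

text \<open>Departure time of job k (k >= 1) from station j (1 <= j <= J) in the tandem network;
  station 0 stands for arrival: dep U V 0 k = U 1 + ... + U k is the arrival time of job k.
  The network is initially empty (dep U V j 0 = 0 for j >= 1), FIFO, single server:
  D_j(k) = max(D_{j-1}(k), D_j(k-1)) + V^j_k.\<close>
fun dep :: "(nat \<Rightarrow> real) \<Rightarrow> (nat \<Rightarrow> nat \<Rightarrow> real) \<Rightarrow> nat \<Rightarrow> nat \<Rightarrow> real" where
  "dep U V 0 k = (\<Sum>i=1..k. U i)"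
| "dep U V (Suc j) 0 = 0"
| "dep U V (Suc j) (Suc k) = max (dep U V j (Suc k)) (dep U V (Suc j) k) + V (Suc j) (Suc k)"

definition sojourn :: "nat \<Rightarrow> (nat \<Rightarrow> real) \<Rightarrow> (nat \<Rightarrow> nat \<Rightarrow> real) \<Rightarrow> nat \<Rightarrow> real" where
  "sojourn J U V n = dep U V J n - dep U V 0 n"

definition tandem_bound :: "nat \<Rightarrow> real \<Rightarrow> real \<Rightarrow> ennreal \<Rightarrow> ennreal" where
  "tandem_bound J lam \<rho> \<Gamma> =
     (if \<Gamma> = \<top> then \<top>
      else (let \<gamma> = enn2real \<Gamma> in
        ennreal (7 * (real J)\<^sup>2 * \<gamma>\<^sup>2 * lam / (1 - \<rho>) * ln (ln (real J * lam * \<gamma> / (1 - \<rho>))))))"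

end

theory Submission
  imports Defs
begin


lemma e_gt: "exp 1 > (27/10::real)"
  using e_approx_32 by (simp add: abs_if split: if_split_asm)

lemma exp5_ge: "exp (5::real) \<ge> 36"
proof -
  have "exp (5::real) = exp 1 ^ 5" by (simp add: exp_of_nat_mult[symmetric])
  moreover have "(2.7::real) ^ 5 \<le> exp 1 ^ 5"
    using e_gt by (intro power_mono) auto
  moreover have "(27/10::real)^5 \<ge> 36" by (simp add: power_divide)
  ultimately show ?thesis by linarith
qed

lemma exp2e_ge: "exp (2 * exp 1) \<ge> exp (5::real)"
  using e_gt by simp

lemma main_ineq:
  fixes K x :: real
  assumes K: "K \<ge> exp (2 * exp 1)" and x: "x \<ge> 1"
  shows "3 * K * phi x - x + 1 \<le> 7 * K^2 * ln (ln K)"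
proof -
  have K36: "K \<ge> 36" using K exp5_ge exp2e_ge by linarith
  have lnK: "ln K \<ge> 2 * exp 1" using K
    by (metis exp_gt_zero exp_le_cancel_iff exp_ln less_le_trans)
  have "2 * exp 1 \<ge> (4::real)" using e_gt by simp
  hence lnK4: "ln K \<ge> 4" using lnK by linarith
  have LK: "ln (ln K) \<ge> ln 4" using lnK4 by simp
  have ln4: "ln (4::real) \<ge> 1"
    using ln3_gt_1 by (smt (verit) ln_le_cancel_iff)
  hence LK1: "ln (ln K) \<ge> 1" using LK by linarith
  have K2: "K^2 * ln (ln K) \<ge> K"
  proof -
    have "K \<le> K^2" using K36 by (simp add: power2_eq_square)
    also have "\<dots> \<le> K^2 * ln (ln K)" using LK1 mult_left_mono[of 1 "ln (ln K)" "K^2"] by simp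
    finally show ?thesis .
  qed
  show ?thesis
  proof (cases "x \<ge> exp (exp 1)")
    case False
    hence "phi x = 1" by (simp add: phi_def)
    thus ?thesis using K2 x K36 by simp
  next
    case True
    define L where "L = ln (ln x)"
    have lnx: "ln x \<ge> exp 1" using True
      by (metis exp_gt_zero exp_le_cancel_iff exp_ln less_le_trans)
    have L1: "L \<ge> 1" unfolding L_def using lnx
      by (metis exp_gt_zero exp_le_cancel_iff exp_ln less_le_trans) 
    have xpos: "x > 0" using x by simp
    have phix: "phi x = sqrt (x * L)" using True by (simp add: phi_def L_def)
    have sq: "sqrt (x * L) = sqrt x * sqrt L" by (simp add: real_sqrt_mult)
    show ?thesis
    proof (cases "x \<le> K^4")
      case True
      have "ln x \<le> ln (K^4)" using True xpos by (subst ln_le_cancel_iff) auto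
      also have "ln (K^4) = 4 * ln K" using K36 by (simp add: ln_realpow)
      finally have "ln x \<le> 4 * ln K" .
      moreover have "ln x > 0" using lnx exp_gt_zero[of 1] by linarith
      ultimately have "L \<le> ln (4 * ln K)" unfolding L_def by (subst ln_le_cancel_iff) auto
      also have "ln (4 * ln K) = ln 4 + ln (ln K)" using lnK4 by (simp add: ln_mult)
      finally have Lb: "L \<le> 2 * ln (ln K)" using LK by linarith
      have amgm: "3 * K * (sqrt x * sqrt L) \<le> x + 9/4 * K^2 * L"
      proof -
        have "0 \<le> (sqrt x - 3/2 * K * sqrt L)^2" by simp
        also have "\<dots> = x + 9/4 * K^2 * L - 3 * K * (sqrt x * sqrt L)"
          using xpos L1 by (simp add: power2_eq_square algebra_simps)
        finally show ?thesis by simp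
      qed
      have "K^2 * L \<le> K^2 * (2 * ln (ln K))"
        using Lb by (intro mult_left_mono) auto
      hence m: "9/4 * K^2 * L \<le> 9/2 * (K^2 * ln (ln K))" by (simp add: algebra_simps)
      have "phi x = sqrt x * sqrt L" using phix sq by simp
      hence e1: "3 * K * phi x = 3 * K * (sqrt x * sqrt L)" by simp
      have e2: "7 * K^2 * ln (ln K) = 7 * (K^2 * ln (ln K))" by simp
      show ?thesis unfolding e1 e2 using amgm m K2 K36 by linarith
    next
      case False
      define y where "y = sqrt (sqrt x)"
      have ypos: "y > 0" using xpos by (simp add: y_def)
      have y4: "y^4 = x"
      proof -
        have "y * y = sqrt x" unfolding y_def using xpos by simp
        have "y^4 = (y*y)*(y*y)" by (simp only: power4_eq_xxxx mult.assoc)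
        also have "\<dots> = sqrt x * sqrt x" using \<open>y * y = sqrt x\<close> by simp
        finally show ?thesis using xpos by simp
      qed
      have Ky: "K < y"
      proof (rule ccontr)
        assume "\<not> K < y" hence "y \<le> K" by simp
        hence "y^4 \<le> K^4" using ypos by (intro power_mono) auto
        thus False using False y4 by simp
      qed
      have "ln x = 4 * ln y" using y4 ypos by (metis ln_realpow of_nat_numeral)
      also have "\<dots> \<le> 4 * (y - 1)" using ln_le_minus_one[OF ypos] by simp
      finally have lnxy: "ln x \<le> 4 * (y - 1)" .
      have "ln x > 0" using lnx exp_gt_zero[of 1] by linarith
      hence "L \<le> ln x - 1" unfolding L_def by (rule ln_le_minus_one)
      hence "9 * L \<le> 36 * y" using lnxy by (simp add: algebra_simps)
      also have "36 * y \<le> y * y" using Ky K36 ypos by (intro mult_right_mono) auto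
      finally have "9 * L \<le> y^2" by (simp add: power2_eq_square)
      hence "9 * K^2 * L \<le> y^2 * y^2"
      proof -
        have "K^2 \<le> y^2" using Ky K36 by (intro power_mono) auto
        have "9 * K^2 * L = K^2 * (9 * L)" by simp
        also have "\<dots> \<le> y^2 * (9*L)" using \<open>K^2 \<le> y^2\<close> L1 by (intro mult_right_mono) auto
        also have "\<dots> \<le> y^2 * y^2" using \<open>9 * L \<le> y^2\<close> by (intro mult_left_mono) auto
        finally show ?thesis .
      qed
      moreover have "y^2 * y^2 = x" using y4 by (simp add: power2_eq_square power4_eq_xxxx)
      ultimately have "9 * K^2 * L \<le> x" by simp
      hence "9 * K^2 * L * x \<le> x * x" using xpos by (intro mult_right_mono) auto
      hence "(3 * K)^2 * (x * L) \<le> x^2"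
        by (simp add: power2_eq_square algebra_simps)
      hence "sqrt ((3 * K)^2 * (x * L)) \<le> sqrt (x^2)" by (rule real_sqrt_le_mono)
      hence "3 * K * sqrt (x * L) \<le> x" using K36 xpos by (simp add: real_sqrt_mult)
      thus ?thesis using phix K2 K36 by simp
    qed
  qed
qed



lemma phi_pos: "phi x > 0"
proof (cases "x \<ge> exp (exp 1)")
  case True
  have "ln x \<ge> exp 1" using True
    by (metis exp_gt_zero exp_le_cancel_iff exp_ln less_le_trans)
  hence "ln (ln x) \<ge> 1"
    by (metis exp_gt_zero exp_le_cancel_iff exp_ln less_le_trans)
  moreover have "x > 0" using True exp_gt_zero[of "exp 1"] by linarith
  ultimately show ?thesis using True by (simp add: phi_def)
qed (simp add: phi_def)

lemma phi_mono:
  assumes "x \<le> y" shows "phi x \<le> phi y"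
proof (cases "y \<ge> exp (exp 1)")
  case False
  thus ?thesis using assms by (simp add: phi_def)
next
  case True
  have ey: "exp (exp 1) \<ge> exp (1::real)" using e_gt by simp
  have lny: "ln y \<ge> exp 1" using True
    by (metis exp_gt_zero exp_le_cancel_iff exp_ln less_le_trans)
  hence Ly: "ln (ln y) \<ge> 1"
    by (metis exp_gt_zero exp_le_cancel_iff exp_ln less_le_trans)
  have y1: "y \<ge> 1" using True ey e_gt by linarith
  show ?thesis
  proof (cases "x \<ge> exp (exp 1)")
    case False
    have "1 * 1 \<le> y * ln (ln y)" using y1 Ly by (intro mult_mono) auto
    thus ?thesis using True False by (simp add: phi_def)
  next
    case xT: True
    have lnx: "ln x \<ge> exp 1" using xT
      by (metis exp_gt_zero exp_le_cancel_iff exp_ln less_le_trans)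
    have xpos: "x > 0" using xT exp_gt_zero[of "exp 1"] by linarith
    have "ln x \<le> ln y" using assms xpos by (subst ln_le_cancel_iff) auto
    moreover have "ln x > 0" using lnx exp_gt_zero[of 1] by linarith
    ultimately have "ln (ln x) \<le> ln (ln y)" by (subst ln_le_cancel_iff) auto
    moreover have "ln (ln x) \<ge> 0" using lnx e_gt by simp
    ultimately have "x * ln (ln x) \<le> y * ln (ln y)"
      using assms xpos by (intro mult_mono) auto
    thus ?thesis using True xT by (simp add: phi_def)
  qed
qed

lemma dep_zero [simp]: "dep U V j 0 = 0"
  by (cases j) auto

lemma dep_unroll:
  "\<exists>i\<le>k. dep U V (Suc j) k \<le> dep U V j i + (\<Sum>l=max i 1..k. V (Suc j) l)"
proof (induction k)
  case 0
  show ?case by (rule exI[of _ 0]) simp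
next
  case (Suc k)
  show ?case
  proof (cases "dep U V j (Suc k) \<ge> dep U V (Suc j) k")
    case True
    show ?thesis by (rule exI[of _ "Suc k"]) (use True in auto)
  next
    case False
    from Suc.IH obtain i where i: "i \<le> k"
      "dep U V (Suc j) k \<le> dep U V j i + (\<Sum>l=max i 1..k. V (Suc j) l)" by blast
    have "(\<Sum>l=max i 1..Suc k. V (Suc j) l) = (\<Sum>l=max i 1..k. V (Suc j) l) + V (Suc j) (Suc k)"
      using i(1) by simp
    thus ?thesis using i False by (intro exI[of _ i]) auto
  qed
qed


lemma dep_chain:
  fixes V :: "nat \<Rightarrow> nat \<Rightarrow> real" and s G :: real
  assumes HB: "\<forall>j\<in>{1..J}. \<forall>i k. i \<le> k \<longrightarrow> k \<le> n \<longrightarrow>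
       (\<Sum>l=max i 1..k. V j l) \<le> real (k - i + 1) * s + 2 * G * phi (real (n - i + 1))"
    and s: "s \<ge> 0" and G: "G \<ge> 0"
  shows "j \<le> J \<Longrightarrow> k \<le> n \<Longrightarrow> \<exists>i\<le>k. dep U V j k \<le> dep U V 0 i + real j * s + real (k - i) * s
            + 2 * real j * G * phi (real (n - i + 1))"
proof (induction j arbitrary: k)
  case 0
  show ?case by (rule exI[of _ k]) simp
next
  case (Suc j)
  obtain i' where i': "i' \<le> k" "dep U V (Suc j) k \<le> dep U V j i' + (\<Sum>l=max i' 1..k. V (Suc j) l)"
    using dep_unroll by blast
  obtain i where i: "i \<le> i'" "dep U V j i' \<le> dep U V 0 i + real j * s + real (i' - i) * s
            + 2 * real j * G * phi (real (n - i + 1))"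
    using Suc.IH[of i'] Suc.prems i'(1) by auto
  have b: "(\<Sum>l=max i' 1..k. V (Suc j) l) \<le> real (k - i' + 1) * s + 2 * G * phi (real (n - i' + 1))"
    using HB Suc.prems i'(1) by auto
  have ph: "phi (real (n - i' + 1)) \<le> phi (real (n - i + 1))"
    using i(1) i'(1) Suc.prems by (intro phi_mono) auto
  have "real (i' - i) + real (k - i' + 1) = real (k - i) + 1" using i(1) i'(1) by auto
  hence "dep U V (Suc j) k \<le> dep U V 0 i + real (Suc j) * s + real (k - i) * s
            + 2 * real j * G * phi (real (n - i + 1)) + 2 * G * phi (real (n - i + 1))"
    using i'(2) i(2) b mult_left_mono[OF ph, of "2*G"] G
    by (simp add: algebra_simps) (smt (verit) distrib_left mult.commute)
  thus ?case using i i'(1) by (intro exI[of _ i]) (auto simp: algebra_simps)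
qed



lemma block_bound:
  fixes v :: "nat \<Rightarrow> real"
  assumes mu: "\<mu> > 0" and smu: "1 / \<mu> \<le> s" and G: "G \<ge> 0"
    and HV: "\<forall>a\<in>{1..n+1}. \<bar>(\<Sum>l=a..n. v l) - real (n+1-a) / \<mu>\<bar> \<le> G * phi (real (n+1-a))"
    and ik: "i \<le> k" "k \<le> n"
  shows "(\<Sum>l=max i 1..k. v l) \<le> real (k - i + 1) * s + 2 * G * phi (real (n - i + 1))"
proof -
  define a where "a = max i 1"
  have a1: "a \<le> k + 1" "1 \<le> a" "i \<le> a" using ik by (auto simp: a_def)
  have split: "(\<Sum>l=a..n. v l) = (\<Sum>l=a..k. v l) + (\<Sum>l=k+1..n. v l)"
    using sum.ub_add_nat[of a k v "n - k"] a1 ik by simp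
  have h1: "(\<Sum>l=a..n. v l) \<le> real (n+1-a) / \<mu> + G * phi (real (n+1-a))"
    using HV a1 ik by (auto dest!: bspec[of _ _ a])
  have h2: "(\<Sum>l=k+1..n. v l) \<ge> real (n+1-(k+1)) / \<mu> - G * phi (real (n+1-(k+1)))"
    using HV ik by (auto dest!: bspec[of _ _ "k+1"])
  have r: "real (n+1-a) / \<mu> - real (n+1-(k+1)) / \<mu> = real (k + 1 - a) / \<mu>"
    using a1 ik by (simp add: diff_divide_distrib[symmetric] of_nat_diff)
  have c1: "real (k + 1 - a) / \<mu> \<le> real (k - i + 1) * s"
  proof -
    have "real (k + 1 - a) / \<mu> = real (k + 1 - a) * (1 / \<mu>)" by simp
    also have "\<dots> \<le> real (k + 1 - a) * s" using smu by (intro mult_left_mono) auto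
    also have "\<dots> \<le> real (k - i + 1) * s" using a1 ik smu mu
      by (intro mult_right_mono) (auto simp: order_trans[OF _ smu])
    finally show ?thesis .
  qed
  have p1: "phi (real (n+1-a)) \<le> phi (real (n - i + 1))" using a1 by (intro phi_mono) auto
  have p2: "phi (real (n+1-(k+1))) \<le> phi (real (n - i + 1))" using ik by (intro phi_mono) auto
  have "(\<Sum>l=a..k. v l) \<le> real (k + 1 - a) / \<mu> + G * phi (real (n+1-a)) + G * phi (real (n+1-(k+1)))"
    using split h1 h2 r by linarith
  also have "\<dots> \<le> real (k - i + 1) * s + G * phi (real (n - i + 1)) + G * phi (real (n - i + 1))"
    using c1 mult_left_mono[OF p1 G] mult_left_mono[OF p2 G] by linarith
  finally show ?thesis by (simp add: a_def)
qed


lemma det_bound: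
  fixes u :: "nat \<Rightarrow> real" and v :: "nat \<Rightarrow> nat \<Rightarrow> real" and \<mu> :: "nat \<Rightarrow> real"
  assumes lam: "lam > 0" and J: "J \<ge> 1" and s: "s > 0"
    and mu: "\<forall>j\<in>{1..J}. \<mu> j > 0" and smu: "\<forall>j\<in>{1..J}. 1 / \<mu> j \<le> s"
    and rho: "lam * s < 1"
    and G: "G \<ge> exp (2 * exp 1) / lam"
    and HU: "\<forall>a\<le>n. (\<Sum>l=a+1..n. u l) \<ge> real (n-a) / lam - G * phi (real (n-a))"
    and HV: "\<forall>j\<in>{1..J}. \<forall>a\<in>{1..n+1}. \<bar>(\<Sum>l=a..n. v j l) - real (n+1-a) / \<mu> j\<bar> \<le> G * phi (real (n+1-a))"
  shows "sojourn J u v n \<le> 7 * (real J)^2 * G^2 * lam / (1 - lam * s)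
            * ln (ln (real J * lam * G / (1 - lam * s))) + real J / lam"
proof -
  define \<rho> where "\<rho> = lam * s"
  have rho0: "\<rho> > 0" "\<rho> < 1" using lam s rho by (auto simp: \<rho>_def)
  have Gpos: "G > 0" using G lam by (smt (verit) divide_pos_pos exp_gt_zero)
  have HB: "\<forall>j\<in>{1..J}. \<forall>i k. i \<le> k \<longrightarrow> k \<le> n \<longrightarrow>
       (\<Sum>l=max i 1..k. v j l) \<le> real (k - i + 1) * s + 2 * G * phi (real (n - i + 1))"
  proof (intro ballI allI impI)
    fix j i k assume j: "j \<in> {1..J}" and ik: "i \<le> k" "k \<le> n"
    show "(\<Sum>l=max i 1..k. v j l) \<le> real (k - i + 1) * s + 2 * G * phi (real (n - i + 1))"
      using block_bound[of "\<mu> j" s G n "v j" i k] j ik mu smu HV Gpos by auto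
  qed
  obtain i where i: "i \<le> n" "dep u v J n \<le> dep u v 0 i + real J * s + real (n - i) * s
            + 2 * real J * G * phi (real (n - i + 1))"
    using dep_chain[OF HB, where j=J and k=n and U=u] s Gpos by auto
  define m where "m = n - i"
  have An: "dep u v 0 n = dep u v 0 i + (\<Sum>l=i+1..n. u l)"
    using sum.ub_add_nat[of 1 i u "n - i"] i(1) by simp
  have HUi: "(\<Sum>l=i+1..n. u l) \<ge> real m / lam - G * phi (real m)"
    using HU i(1) by (auto simp: m_def)
  have ph: "phi (real m) \<le> phi (real m + 1)" by (intro phi_mono) auto
  have nm: "real (n - i + 1) = real m + 1" by (simp add: m_def)
  have W1: "sojourn J u v n \<le> real J * s + real m * s - real m / lam + G * phi (real m)
      + 2 * real J * G * phi (real m + 1)"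
  proof -
    have i2: "dep u v J n \<le> dep u v 0 i + real J * s + real m * s + 2 * real J * G * phi (real m + 1)"
      using i(2) nm by (simp add: m_def add.commute)
    show ?thesis using i2 An HUi unfolding sojourn_def by linarith
  qed
  define c where "c = (1 - \<rho>) / lam"
  have cpos: "c > 0" using rho0 lam by (simp add: c_def)
  have ms: "real m * s - real m / lam = - real m * c"
    using lam by (simp add: c_def \<rho>_def field_simps)
  have Js: "real J * s \<le> real J / lam"
  proof -
    have "s \<le> 1 / lam" using rho lam by (simp add: field_simps)
    thus ?thesis using J by (simp add: divide_simps mult_left_mono) (metis lam)
  qed
  have Gph: "G * phi (real m) \<le> real J * G * phi (real m + 1)"
  proof -
    have "G * phi (real m) \<le> G * phi (real m + 1)" using ph Gpos by (intro mult_left_mono) auto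
    also have "\<dots> \<le> real J * (G * phi (real m + 1))" using J Gpos phi_pos[of "real m + 1"]
      using mult_right_mono[of 1 "real J" "G * phi (real m + 1)"] by simp
    finally show ?thesis by (simp add: mult.assoc)
  qed
  have W2: "sojourn J u v n \<le> real J / lam + (3 * real J * G * phi (real m + 1) - real m * c)"
    using W1 ms Js Gph by (simp add: algebra_simps)
  define K where "K = real J * lam * G / (1 - \<rho>)"
  have KJ: "K * c = real J * G" using rho0 lam by (simp add: K_def c_def field_simps)
  have K1: "K \<ge> lam * G"
  proof -
    have "lam * G \<le> real J * lam * G" using J lam Gpos by simp
    also have "\<dots> \<le> real J * lam * G / (1 - \<rho>)" using rho0 J lam Gpos
      by (simp add: le_divide_eq mult_left_le)
    finally show ?thesis by (simp add: K_def)
  qed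
  have "lam * G \<ge> exp (2 * exp 1)" using G lam by (simp add: field_simps)
  hence Kb: "K \<ge> exp (2 * exp 1)" using K1 by linarith
  have mi: "3 * K * phi (real m + 1) - (real m + 1) + 1 \<le> 7 * K^2 * ln (ln K)"
    using main_ineq[OF Kb, of "real m + 1"] by simp
  have "c * (3 * K * phi (real m + 1) - (real m + 1) + 1) \<le> c * (7 * K^2 * ln (ln K))"
    using mi cpos by (intro mult_left_mono) auto
  moreover have "c * (3 * K * phi (real m + 1) - (real m + 1) + 1) = 3 * (K * c) * phi (real m + 1) - real m * c"
    by (simp add: algebra_simps)
  moreover have "c * (7 * K^2 * ln (ln K)) = 7 * (K * c) * K * ln (ln K)"
    by (simp add: algebra_simps power2_eq_square)
  ultimately have "3 * (K * c) * phi (real m + 1) - real m * c \<le> 7 * (K * c) * K * ln (ln K)"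
    by simp
  hence "3 * real J * G * phi (real m + 1) - real m * c \<le> 7 * (K * c) * K * ln (ln K)"
    unfolding KJ by (simp add: mult.assoc)
  also have "7 * (K * c) * K * ln (ln K) = 7 * (real J)^2 * G^2 * lam / (1 - lam * s)
            * ln (ln (real J * lam * G / (1 - lam * s)))"
    unfolding KJ using rho0 by (simp add: K_def \<rho>_def power2_eq_square field_simps)
  finally show ?thesis using W2 by linarith
qed



lemma (in prob_space) exch:
  fixes X :: "'i \<Rightarrow> 'a \<Rightarrow> real" and h :: "('i \<Rightarrow> real) \<Rightarrow> ennreal"
  assumes I: "finite I" "I \<noteq> {}"
    and rv: "\<forall>i\<in>I. X i \<in> borel_measurable M"
    and ind: "indep_vars (\<lambda>_. borel) X I"
    and t: "t \<in> I \<rightarrow> I" "inj_on t I"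
    and dist: "\<forall>i\<in>I. distr M borel (X (t i)) = distr M borel (X i)"
    and h: "h \<in> borel_measurable (PiM I (\<lambda>_. borel))"
  shows "(\<integral>\<^sup>+x. h (\<lambda>i\<in>I. X i x) \<partial>M) = (\<integral>\<^sup>+x. h (\<lambda>i\<in>I. X (t i) x) \<partial>M)"
proof -
  let ?N = "PiM I (\<lambda>_. borel :: real measure)"
  define Mi where "Mi i = distr M borel (X i)" for i
  define P where "P = PiM I Mi"
  define f where "f x = (\<lambda>i\<in>I. X i x)" for x
  define g where "g \<omega> = (\<lambda>i\<in>I. \<omega> (t i) :: real)" for \<omega>
  have fm: "f \<in> measurable M ?N" unfolding f_def using rv by (intro measurable_restrict) auto
  have dP: "distr M ?N f = P" unfolding P_def Mi_def f_def
    using indep_vars_iff_distr_eq_PiM'[where I=I and M'="\<lambda>_. borel" and X=X] I rv ind by auto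
  have sP: "sets P = sets ?N" unfolding P_def Mi_def by (intro sets_PiM_cong) auto
  have gN: "g \<in> measurable ?N ?N" unfolding g_def using t
    by (intro measurable_restrict measurable_component_singleton) auto
  have gP: "g \<in> measurable P P" using gN by (simp add: measurable_cong_sets[OF sP sP])
  have hP: "h \<in> borel_measurable P" using h by (simp add: measurable_cong_sets[OF sP refl])
  have Pt: "PiM I (\<lambda>i. Mi (t i)) = P" unfolding P_def
    using dist t by (intro PiM_cong) (auto simp: Mi_def)
  have ps: "\<And>i. i \<in> I \<Longrightarrow> prob_space (Mi i)" using rv unfolding Mi_def
    by (auto intro: prob_space_distr)
  have reidx: "distr P P g = P"
    using distr_PiM_reindex[where K=I and M=Mi and f=t and I=I, OF ps] t Pt unfolding g_def P_def
    by simp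
  have "(\<integral>\<^sup>+x. h (f x) \<partial>M) = (\<integral>\<^sup>+\<omega>. h \<omega> \<partial>P)"
    using nn_integral_distr[OF fm, of h] hP dP by simp
  also have "\<dots> = (\<integral>\<^sup>+\<omega>. h \<omega> \<partial>distr P P g)" using reidx by simp
  also have "\<dots> = (\<integral>\<^sup>+\<omega>. h (g \<omega>) \<partial>P)" using nn_integral_distr[OF gP, of h] hP by simp
  also have "\<dots> = (\<integral>\<^sup>+\<omega>. h (g \<omega>) \<partial>distr M ?N f)" using dP by simp
  also have "\<dots> = (\<integral>\<^sup>+x. h (g (f x)) \<partial>M)"
    using nn_integral_distr[OF fm, of "\<lambda>\<omega>. h (g \<omega>)"] measurable_compose[OF gP hP] dP by simp
  also have "(\<lambda>x. g (f x)) = (\<lambda>x. \<lambda>i\<in>I. X (t i) x)"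
    unfolding f_def g_def using t by (auto simp: fun_eq_iff restrict_def)
  finally show ?thesis by (simp add: f_def restrict_def)
qed


lemma dep_cong:
  assumes "\<forall>k\<in>{1..n}. u k = u' k" "\<forall>j\<in>{1..J}. \<forall>k\<in>{1..n}. v j k = v' j k"
  shows "j \<le> J \<Longrightarrow> k \<le> n \<Longrightarrow> dep u v j k = dep u' v' j k"
proof (induction j arbitrary: k)
  case 0
  thus ?case using assms(1) by (auto intro!: sum.cong)
next
  case (Suc j)
  note outer = Suc.IH
  show ?case using Suc.prems
  proof (induction k)
    case 0 thus ?case by simp
  next
    case (Suc k)
    thus ?case using outer[of "Suc k"] assms(2) by auto
  qed
qed

lemma sojourn_cong:
  assumes "\<forall>k\<in>{1..n}. u k = u' k" "\<forall>j\<in>{1..J}. \<forall>k\<in>{1..n}. v j k = v' j k"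
  shows "sojourn J u v n = sojourn J u' v' n"
proof -
  have "dep u v J n = dep u' v' J n" "dep u v 0 n = dep u' v' 0 n"
    by (rule dep_cong[OF assms]; simp)+
  thus ?thesis unfolding sojourn_def by simp
qed

lemma comp_meas: "(\<lambda>\<omega>. \<omega> i) \<in> borel_measurable (PiM I (\<lambda>_. borel :: real measure))"
proof (cases "i \<in> I")
  case True thus ?thesis by (rule measurable_component_singleton)
next
  case False
  have "(\<lambda>\<omega>. \<omega> i) \<in> borel_measurable (PiM I (\<lambda>_. borel :: real measure)) \<longleftrightarrow>
        (\<lambda>\<omega>. undefined :: real) \<in> borel_measurable (PiM I (\<lambda>_. borel :: real measure))"
    using False by (intro measurable_cong) (auto simp: space_PiM PiE_def extensional_def)
  thus ?thesis by simp
qed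

lemma dep_meas:
  "(\<lambda>\<omega>. dep (\<lambda>k. \<omega> (Inl k)) (\<lambda>j k. \<omega> (Inr (j, k))) j k) \<in> borel_measurable (PiM I (\<lambda>_. borel :: real measure))"
proof (induction j arbitrary: k)
  case 0
  show ?case by simp (rule borel_measurable_sum, rule comp_meas)
next
  case (Suc j)
  note outer = Suc.IH
  show ?case
  proof (induction k)
    case 0 thus ?case by simp
  next
    case (Suc k)
    show ?case
      apply (simp only: dep.simps)
      apply (intro borel_measurable_add borel_measurable_max outer Suc.IH comp_meas)
      done
  qed
qed

lemma h_meas:
  "(\<lambda>\<omega>. ennreal (sojourn J (\<lambda>k. \<omega> (Inl k)) (\<lambda>j k. \<omega> (Inr (j, k))) n)) \<in> borel_measurable (PiM I (\<lambda>_. borel :: real measure))"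
  unfolding sojourn_def using dep_meas[where j=J and k=n and I=I] dep_meas[where j=0 and k=n and I=I]
  by (intro measurable_compose[OF _ measurable_ennreal] borel_measurable_diff) (simp_all del: dep.simps)

lemma (in prob_space) var0_AE:
  fixes Y :: "'a \<Rightarrow> real"
  assumes Y: "Y \<in> borel_measurable M" and sq: "integrable M (\<lambda>x. (Y x)\<^sup>2)" and v: "variance Y = 0"
  shows "AE x in M. Y x = expectation Y"
proof -
  have iY: "integrable M Y" using square_integrable_imp_integrable[OF Y sq] .
  define c where "c = expectation Y"
  have "integrable M (\<lambda>x. (Y x)\<^sup>2 - 2 * c * Y x + c\<^sup>2)"
    using sq iY by auto
  moreover have "(\<lambda>x. (Y x)\<^sup>2 - 2 * c * Y x + c\<^sup>2) = (\<lambda>x. (Y x - c)\<^sup>2)"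
    by (auto simp: power2_diff algebra_simps)
  ultimately have i2: "integrable M (\<lambda>x. (Y x - c)\<^sup>2)" by simp
  have "AE x in M. (Y x - c)\<^sup>2 = 0"
    using integral_nonneg_eq_0_iff_AE[OF i2] v by (simp add: c_def)
  thus ?thesis by (auto simp: c_def)
qed

lemma (in prob_space) AE_transfer:
  fixes Y Z :: "'a \<Rightarrow> real"
  assumes Y: "Y \<in> borel_measurable M" and Z: "Z \<in> borel_measurable M"
    and d: "distr M borel Z = distr M borel Y" and a: "AE x in M. Y x = c"
  shows "AE x in M. Z x = c"
proof -
  have "AE y in distr M borel Y. y = c" using a Y by (subst AE_distr_iff) auto
  hence "AE y in distr M borel Z. y = c" unfolding d .
  thus ?thesis using Z by (subst (asm) AE_distr_iff) auto
qed


lemma lil_bound: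
  fixes X :: "nat \<Rightarrow> real"
  assumes le: "ennreal (sqrt 2 * \<sigma>) * lil_const X \<sigma> \<le> ennreal G" and s: "\<sigma> > 0" and G: "G \<ge> 0"
  shows "\<bar>\<Sum>k=1..m. X k\<bar> \<le> G * phi (real m)"
proof (cases "m = 0")
  case True thus ?thesis using G phi_pos[of 0] by simp
next
  case False
  define S where "S = (\<Sum>k=1..m. X k)"
  have "ennreal (\<bar>S\<bar> / (\<sigma> * sqrt 2 * phi (real m))) \<le> lil_const X \<sigma>"
    unfolding lil_const_def S_def using False by (intro SUP_upper) auto
  hence "ennreal (sqrt 2 * \<sigma>) * ennreal (\<bar>S\<bar> / (\<sigma> * sqrt 2 * phi (real m))) \<le> ennreal G"
    using le by (meson mult_left_mono order_trans zero_le)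
  moreover have "ennreal (sqrt 2 * \<sigma>) * ennreal (\<bar>S\<bar> / (\<sigma> * sqrt 2 * phi (real m)))
       = ennreal (\<bar>S\<bar> / phi (real m))"
    using s phi_pos[of "real m"] by (subst ennreal_mult[symmetric]) (auto simp: field_simps)
  ultimately have "\<bar>S\<bar> / phi (real m) \<le> G" using G by (simp add: ennreal_le_iff)
  thus ?thesis using phi_pos[of "real m"] by (simp add: S_def pos_divide_le_eq)
qed

lemma lil_meas:
  assumes "\<forall>k\<ge>1. f k \<in> borel_measurable M"
  shows "(\<lambda>x. lil_const (\<lambda>k. f k x - c) \<sigma>) \<in> borel_measurable M"
  unfolding lil_const_def
proof (intro borel_measurable_SUP measurable_compose[OF _ measurable_ennreal])
  fix m :: nat assume "m \<in> {1..}"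
  show "(\<lambda>x. \<bar>\<Sum>k = 1..m. f k x - c\<bar> / (\<sigma> * sqrt 2 * phi (real m))) \<in> borel_measurable M"
    using assms by (intro borel_measurable_divide borel_measurable_abs borel_measurable_sum borel_measurable_diff) auto
qed auto

lemma Max_split:
  fixes a b :: "'b::linorder"
  assumes "finite S" "S \<noteq> {}"
  shows "Max ({a, b} \<union> {f j | j. j \<in> S}) = max a (max b (Max (f ` S)))"
proof -
  have "{a, b} \<union> {f j | j. j \<in> S} = insert a (insert b (f ` S))" by auto
  thus ?thesis using assms by (simp add: Max_insert)
qed

lemma tb_meas: "tandem_bound J lam \<rho> \<in> borel_measurable borel"
  unfolding tandem_bound_def Let_def by measurable



lemma dev_bound:
  fixes f :: "nat \<Rightarrow> real"
  assumes le: "ennreal (sqrt 2 * \<sigma>) * lil_const (\<lambda>k. f k - c) \<sigma> \<le> ennreal G"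
    and s: "\<sigma> \<ge> 0" and G: "G \<ge> 0" and z: "\<sigma> = 0 \<longrightarrow> (\<forall>k\<ge>1. f k = c)"
  shows "\<bar>(\<Sum>p=1..m. f p) - real m * c\<bar> \<le> G * phi (real m)"
proof -
  have e: "(\<Sum>p=1..m. f p) - real m * c = (\<Sum>p=1..m. f p - c)"
    by (simp add: sum_subtractf)
  show ?thesis
  proof (cases "\<sigma> = 0")
    case True
    hence "(\<Sum>p=1..m. f p - c) = 0" using z by (intro sum.neutral) auto
    thus ?thesis using e G phi_pos[of "real m"] by simp
  next
    case False
    thus ?thesis unfolding e using lil_bound[OF le _ G, of m] s by simp
  qed
qed

lemma rev_sum:
  fixes f :: "nat \<Rightarrow> real"
  assumes "a \<le> n"
  shows "(\<Sum>l=a+1..n. f (n+1-l)) = (\<Sum>p=1..n-a. f p)"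
  using assms
  by (intro sum.reindex_bij_witness[of _ "\<lambda>p. n+1-p" "\<lambda>l. n+1-l"]) auto


lemma pathwise:
  fixes u :: "nat \<Rightarrow> real" and v :: "nat \<Rightarrow> nat \<Rightarrow> real" and \<mu> \<sigma>s :: "nat \<Rightarrow> real"
    and \<Gamma> :: ennreal
  assumes lam: "lam > 0" and J: "J \<ge> 1" and mu: "\<forall>j\<in>{1..J}. \<mu> j > 0"
    and sa: "\<sigma>a \<ge> 0" and ss: "\<forall>j\<in>{1..J}. \<sigma>s j \<ge> 0"
    and rho: "lam / Min (\<mu> ` {1..J}) < 1"
    and GU: "ennreal (sqrt 2 * \<sigma>a) * lil_const (\<lambda>k. u k - 1 / lam) \<sigma>a \<le> \<Gamma>"
    and GV: "\<forall>j\<in>{1..J}. ennreal (sqrt 2 * \<sigma>s j) * lil_const (\<lambda>k. v j k - 1 / \<mu> j) (\<sigma>s j) \<le> \<Gamma>"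
    and Gc: "ennreal (exp (2 * exp 1) / lam) \<le> \<Gamma>"
    and U0: "\<sigma>a = 0 \<longrightarrow> (\<forall>k\<ge>1. u k = 1 / lam)"
    and V0: "\<forall>j\<in>{1..J}. \<sigma>s j = 0 \<longrightarrow> (\<forall>k\<ge>1. v j k = 1 / \<mu> j)"
  shows "ennreal (sojourn J (\<lambda>k. u (n+1-k)) (\<lambda>j k. v j (n+1-k)) n)
          \<le> tandem_bound J lam (lam / Min (\<mu> ` {1..J})) \<Gamma> + ennreal (real J / lam)"
proof (cases "\<Gamma> = \<top>")
  case True thus ?thesis by (simp add: tandem_bound_def)
next
  case False
  define G where "G = enn2real \<Gamma>"
  have GG: "\<Gamma> = ennreal G" "G \<ge> 0" using False by (auto simp: G_def ennreal_enn2real_if)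
  define mm where "mm = Min (\<mu> ` {1..J})"
  have fin: "finite (\<mu> ` {1..J})" "\<mu> ` {1..J} \<noteq> {}" using J by auto
  have mmpos: "mm > 0" using Min_in[OF fin] mu unfolding mm_def by auto
  have smu: "\<forall>j\<in>{1..J}. 1 / \<mu> j \<le> 1 / mm"
  proof
    fix j assume j: "j \<in> {1..J}"
    have "mm \<le> \<mu> j" unfolding mm_def using fin j by (intro Min_le) auto
    thus "1 / \<mu> j \<le> 1 / mm" using mmpos by (intro divide_left_mono) auto
  qed
  have rs: "lam * (1 / mm) = lam / mm" by simp
  have rho': "lam * (1 / mm) < 1" using rho by (simp add: mm_def)
  have Gb: "G \<ge> exp (2 * exp 1) / lam" using Gc GG lam by (simp add: ennreal_le_iff)
  have devU: "\<And>m. \<bar>(\<Sum>p=1..m. u p) - real m * (1 / lam)\<bar> \<le> G * phi (real m)"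
    using dev_bound[of \<sigma>a u "1/lam" G] GU GG sa U0 by simp
  have devV: "\<And>j m. j \<in> {1..J} \<Longrightarrow> \<bar>(\<Sum>p=1..m. v j p) - real m * (1 / \<mu> j)\<bar> \<le> G * phi (real m)"
  proof -
    fix j m assume j: "j \<in> {1..J}"
    show "\<bar>(\<Sum>p=1..m. v j p) - real m * (1 / \<mu> j)\<bar> \<le> G * phi (real m)"
      using dev_bound[of "\<sigma>s j" "v j" "1 / \<mu> j" G m] GV GG ss V0 j by simp
  qed
  have HU: "\<forall>a\<le>n. (\<Sum>l=a+1..n. u (n+1-l)) \<ge> real (n-a) / lam - G * phi (real (n-a))"
  proof (intro allI impI)
    fix a assume a: "a \<le> n"
    show "(\<Sum>l=a+1..n. u (n+1-l)) \<ge> real (n-a) / lam - G * phi (real (n-a))"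
      using rev_sum[OF a, of u] devU[of "n-a"] by (simp add: abs_le_iff)
  qed
  have HV: "\<forall>j\<in>{1..J}. \<forall>a\<in>{1..n+1}. \<bar>(\<Sum>l=a..n. v j (n+1-l)) - real (n+1-a) / \<mu> j\<bar> \<le> G * phi (real (n+1-a))"
  proof (intro ballI)
    fix j a assume j: "j \<in> {1..J}" and a: "a \<in> {1..n+1}"
    have a1: "a - 1 \<le> n" "a - 1 + 1 = a" "n - (a - 1) = n + 1 - a" using a by auto
    have "(\<Sum>l=a..n. v j (n+1-l)) = (\<Sum>p=1..n+1-a. v j p)"
      using rev_sum[OF a1(1), of "v j"] a1 by simp
    thus "\<bar>(\<Sum>l=a..n. v j (n+1-l)) - real (n+1-a) / \<mu> j\<bar> \<le> G * phi (real (n+1-a))"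
      using devV[OF j, of "n+1-a"] by simp
  qed
  have db: "sojourn J (\<lambda>k. u (n+1-k)) (\<lambda>j k. v j (n+1-k)) n \<le> 7 * (real J)^2 * G^2 * lam / (1 - lam * (1/mm))
            * ln (ln (real J * lam * G / (1 - lam * (1/mm)))) + real J / lam"
    using det_bound[of lam J "1/mm" \<mu> G n "\<lambda>k. u (n+1-k)" "\<lambda>j k. v j (n+1-k)"] lam J mmpos mu smu rho' Gb HU HV
    by simp
  define B where "B = 7 * (real J)^2 * G^2 * lam / (1 - lam / mm) * ln (ln (real J * lam * G / (1 - lam / mm)))"
  have tb: "tandem_bound J lam (lam / Min (\<mu> ` {1..J})) \<Gamma> = ennreal B"
    unfolding tandem_bound_def GG(1) B_def mm_def using GG(2) by (simp add: Let_def)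
  have db': "sojourn J (\<lambda>k. u (n+1-k)) (\<lambda>j k. v j (n+1-k)) n \<le> B + real J / lam"
    using db unfolding B_def rs .
  have "ennreal (B + real J / lam) \<le> ennreal B + ennreal (real J / lam)"
  proof (cases "B \<ge> 0")
    case True thus ?thesis using lam by (simp add: ennreal_plus)
  next
    case False
    hence "ennreal (B + real J / lam) \<le> ennreal (real J / lam)" by (intro ennreal_leI) auto
    thus ?thesis by (meson add_increasing order_trans zero_le order_refl)
  qed
  hence "ennreal (sojourn J (\<lambda>k. u (n+1-k)) (\<lambda>j k. v j (n+1-k)) n) \<le> ennreal B + ennreal (real J / lam)"
    using db' by (meson ennreal_leI order_trans)
  thus ?thesis unfolding tb .
qed



theorem corollary1:
  fixes M :: "'a measure"
    and J :: nat
    and U :: "nat \<Rightarrow> 'a \<Rightarrow> real"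
    and V :: "nat \<Rightarrow> nat \<Rightarrow> 'a \<Rightarrow> real"
    and lam \<sigma>a :: real
    and \<mu> \<sigma>s :: "nat \<Rightarrow> real"
  defines "\<mu>min \<equiv> Min (\<mu> ` {1..J})"
  defines "\<rho> \<equiv> lam / \<mu>min"
  defines "\<Gamma> \<equiv> (\<lambda>x. Max ({ennreal (sqrt 2 * \<sigma>a) * lil_const (\<lambda>k. U k x - 1 / lam) \<sigma>a,
                              ennreal (exp (2 * exp 1) / lam)}
                      \<union> {ennreal (sqrt 2 * \<sigma>s j) * lil_const (\<lambda>k. V j k x - 1 / \<mu> j) (\<sigma>s j) | j. j \<in> {1..J}}))"
  defines "W \<equiv> (\<lambda>n x. sojourn J (\<lambda>k. U k x) (\<lambda>j k. V j k x) n)"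
  assumes M: "prob_space M"
    and J: "J \<ge> 1"
    and lam: "lam > 0" and mu: "\<forall>j\<in>{1..J}. \<mu> j > 0"
    and sa: "\<sigma>a \<ge> 0" and ss: "\<forall>j\<in>{1..J}. \<sigma>s j \<ge> 0"
    and indep: "prob_space.indep_vars M (\<lambda>_. borel)
                  (\<lambda>i. case i of Inl k \<Rightarrow> U k | Inr (j, k) \<Rightarrow> V j k)
                  (Inl ` {1..} \<union> Inr ` ({1..J} \<times> {1..}))"
    and U_meas: "\<forall>k\<ge>1. U k \<in> borel_measurable M"
    and V_meas: "\<forall>j\<in>{1..J}. \<forall>k\<ge>1. V j k \<in> borel_measurable M"
    and U_id: "\<forall>k\<ge>1. distr M borel (U k) = distr M borel (U 1)"
    and V_id: "\<forall>j\<in>{1..J}. \<forall>k\<ge>1. distr M borel (V j k) = distr M borel (V j 1)"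
    and U_nonneg: "\<forall>k\<ge>1. AE x in M. U k x \<ge> 0"
    and V_nonneg: "\<forall>j\<in>{1..J}. \<forall>k\<ge>1. AE x in M. V j k x \<ge> 0"
    and U_sq: "integrable M (\<lambda>x. (U 1 x)\<^sup>2)"
    and V_sq: "\<forall>j\<in>{1..J}. integrable M (\<lambda>x. (V j 1 x)\<^sup>2)"
    and U_mean: "prob_space.expectation M (U 1) = 1 / lam"
    and V_mean: "\<forall>j\<in>{1..J}. prob_space.expectation M (V j 1) = 1 / \<mu> j"
    and U_var: "prob_space.variance M (U 1) = \<sigma>a\<^sup>2"
    and V_var: "\<forall>j\<in>{1..J}. prob_space.variance M (V j 1) = (\<sigma>s j)\<^sup>2"
    and stable: "\<rho> < 1"
  shows "(\<forall>n\<ge>1. (\<integral>\<^sup>+ x. ennreal (W n x) \<partial>M)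
                 \<le> (\<integral>\<^sup>+ x. tandem_bound J lam \<rho> (\<Gamma> x) \<partial>M) + ennreal (real J / lam))
       \<and> (\<forall>(N :: 'b measure) Winf. prob_space N \<longrightarrow> Winf \<in> borel_measurable N
            \<longrightarrow> (\<forall>x\<in>space N. Winf x \<ge> 0)
            \<longrightarrow> (\<lambda>n. \<integral>\<^sup>+ x. ennreal (W n x) \<partial>M) \<longlonglongrightarrow> (\<integral>\<^sup>+ x. ennreal (Winf x) \<partial>N)
            \<longrightarrow> (\<integral>\<^sup>+ x. ennreal (Winf x) \<partial>N)
                 \<le> (\<integral>\<^sup>+ x. tandem_bound J lam \<rho> (\<Gamma> x) \<partial>M) + ennreal (real J / lam))"
proof -
  interpret p: prob_space M by (rule M)
  have finJ: "finite {1..J}" "{1..J} \<noteq> {}" using J by auto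
  have Gfin: "\<And>a b f. finite ({a, b} \<union> {f j | j. j \<in> {1..J}} :: ennreal set)"
    by (simp add: Setcompr_eq_image)
  have GU: "\<And>x. ennreal (sqrt 2 * \<sigma>a) * lil_const (\<lambda>k. U k x - 1 / lam) \<sigma>a \<le> \<Gamma> x"
    unfolding \<Gamma>_def by (rule Max_ge[OF Gfin]) auto
  have Gc: "\<And>x. ennreal (exp (2 * exp 1) / lam) \<le> \<Gamma> x"
    unfolding \<Gamma>_def by (rule Max_ge[OF Gfin]) auto
  have GV: "\<And>x. \<forall>j\<in>{1..J}. ennreal (sqrt 2 * \<sigma>s j) * lil_const (\<lambda>k. V j k x - 1 / \<mu> j) (\<sigma>s j) \<le> \<Gamma> x"
    unfolding \<Gamma>_def by (intro ballI Max_ge[OF Gfin]) auto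
  have AEU: "AE x in M. \<sigma>a = 0 \<longrightarrow> (\<forall>k\<ge>1. U k x = 1 / lam)"
  proof (cases "\<sigma>a = 0")
    case False thus ?thesis by simp
  next
    case True
    have U1m: "U 1 \<in> borel_measurable M" using U_meas by blast
    have v0: "p.variance (U 1) = 0" using U_var True by simp
    have "AE x in M. U 1 x = p.expectation (U 1)" by (rule p.var0_AE[OF U1m U_sq v0])
    hence U1: "AE x in M. U 1 x = 1 / lam" unfolding U_mean .
    have "\<forall>k. AE x in M. k \<ge> 1 \<longrightarrow> U k x = 1 / lam"
    proof
      fix k show "AE x in M. k \<ge> 1 \<longrightarrow> U k x = 1 / lam"
      proof (cases "k \<ge> 1")
        case True
        have Ukm: "U k \<in> borel_measurable M" using U_meas True by blast
        have d: "distr M borel (U k) = distr M borel (U 1)" using U_id True by blast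
        have "AE x in M. U k x = 1 / lam" by (rule p.AE_transfer[OF U1m Ukm d U1])
        thus ?thesis by (rule AE_mp) (rule AE_I2, simp)
      next
        case False thus ?thesis by simp
      qed
    qed
    hence "AE x in M. \<forall>k. k \<ge> 1 \<longrightarrow> U k x = 1 / lam" by (rule AE_all_countable[THEN iffD2])
    thus ?thesis by auto
  qed
  have AEV: "AE x in M. \<forall>j\<in>{1..J}. \<sigma>s j = 0 \<longrightarrow> (\<forall>k\<ge>1. V j k x = 1 / \<mu> j)"
  proof -
    have "\<forall>q::nat\<times>nat. AE x in M. fst q \<in> {1..J} \<longrightarrow> \<sigma>s (fst q) = 0 \<longrightarrow> snd q \<ge> 1 \<longrightarrow>
            V (fst q) (snd q) x = 1 / \<mu> (fst q)"
    proof
      fix q :: "nat \<times> nat"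
      obtain j k where q: "q = (j, k)" by (cases q)
      show "AE x in M. fst q \<in> {1..J} \<longrightarrow> \<sigma>s (fst q) = 0 \<longrightarrow> snd q \<ge> 1 \<longrightarrow>
            V (fst q) (snd q) x = 1 / \<mu> (fst q)"
      proof (cases "j \<in> {1..J} \<and> \<sigma>s j = 0 \<and> k \<ge> 1")
        case True
        have V1m: "V j 1 \<in> borel_measurable M" using V_meas True by blast
        have Vsq: "integrable M (\<lambda>x. (V j 1 x)\<^sup>2)" using V_sq True by blast
        have v0: "p.variance (V j 1) = 0" using V_var True by simp
        have "AE x in M. V j 1 x = p.expectation (V j 1)" by (rule p.var0_AE[OF V1m Vsq v0])
        hence V1: "AE x in M. V j 1 x = 1 / \<mu> j" using V_mean True by simp
        have Vkm: "V j k \<in> borel_measurable M" using V_meas True by blast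
        have d: "distr M borel (V j k) = distr M borel (V j 1)" using V_id True by blast
        have "AE x in M. V j k x = 1 / \<mu> j" by (rule p.AE_transfer[OF V1m Vkm d V1])
        thus ?thesis using q by auto
      qed (auto simp: q)
    qed
    hence "AE x in M. \<forall>q::nat\<times>nat. fst q \<in> {1..J} \<longrightarrow> \<sigma>s (fst q) = 0 \<longrightarrow> snd q \<ge> 1 \<longrightarrow>
            V (fst q) (snd q) x = 1 / \<mu> (fst q)" by (rule AE_all_countable[THEN iffD2])
    thus ?thesis by (elim AE_mp) (auto intro!: AE_I2)
  qed
  have Gmeas: "\<Gamma> \<in> borel_measurable M"
  proof -
    have eq: "\<Gamma> = (\<lambda>x. max (ennreal (sqrt 2 * \<sigma>a) * lil_const (\<lambda>k. U k x - 1 / lam) \<sigma>a)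
        (max (ennreal (exp (2 * exp 1) / lam))
          (Max ((\<lambda>j. ennreal (sqrt 2 * \<sigma>s j) * lil_const (\<lambda>k. V j k x - 1 / \<mu> j) (\<sigma>s j)) ` {1..J}))))"
      unfolding \<Gamma>_def using finJ by (intro ext Max_split)
    have lU: "(\<lambda>x. lil_const (\<lambda>k. U k x - 1 / lam) \<sigma>a) \<in> borel_measurable M"
      using U_meas by (intro lil_meas) auto
    have lV: "\<And>j. j \<in> {1..J} \<Longrightarrow> (\<lambda>x. lil_const (\<lambda>k. V j k x - 1 / \<mu> j) (\<sigma>s j)) \<in> borel_measurable M"
      using V_meas by (intro lil_meas) auto
    show ?thesis unfolding eq using lU lV finJ by measurable
  qed
  have TBmeas: "(\<lambda>x. tandem_bound J lam \<rho> (\<Gamma> x)) \<in> borel_measurable M"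
    using measurable_compose[OF Gmeas tb_meas] .
  have rho': "lam / Min (\<mu> ` {1..J}) < 1" using stable by (simp add: \<rho>_def \<mu>min_def)
  have part1: "\<forall>n\<ge>1. (\<integral>\<^sup>+ x. ennreal (W n x) \<partial>M)
                 \<le> (\<integral>\<^sup>+ x. tandem_bound J lam \<rho> (\<Gamma> x) \<partial>M) + ennreal (real J / lam)"
  proof (intro allI impI)
    fix n :: nat assume n: "n \<ge> 1"
    define I where "I = Inl ` {1..n} \<union> Inr ` ({1..J} \<times> {1..n})"
    define X where "X = (\<lambda>i. case i of Inl k \<Rightarrow> U k | Inr (j, k) \<Rightarrow> V j k)"
    define t where "t = (\<lambda>i. case i of Inl k \<Rightarrow> Inl (n+1-k) | Inr (j, k) \<Rightarrow> (Inr (j, n+1-k) :: nat + nat \<times> nat))"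
    define h where "h = (\<lambda>\<omega>. ennreal (sojourn J (\<lambda>k. \<omega> (Inl k)) (\<lambda>j k. \<omega> (Inr (j, k))) n))"
    have I: "finite I" "I \<noteq> {}" using n by (auto simp: I_def)
    have rv: "\<forall>i\<in>I. X i \<in> borel_measurable M"
    proof
      fix i assume i: "i \<in> I"
      then consider (a) k where "i = Inl k" "k \<in> {1..n}" | (b) j k where "i = Inr (j, k)" "j \<in> {1..J}" "k \<in> {1..n}"
        by (auto simp: I_def)
      thus "X i \<in> borel_measurable M"
      proof cases
        case a
        hence "X i = U k" "k \<ge> 1" by (simp_all add: X_def)
        thus ?thesis using U_meas by metis
      next
        case b
        hence "X i = V j k" "k \<ge> 1" "j \<in> {1..J}" by (simp_all add: X_def)
        thus ?thesis using V_meas by metis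
      qed
    qed
    have ind: "p.indep_vars (\<lambda>_. borel) X I"
    proof (rule p.indep_vars_subset[OF indep[folded X_def]])
      show "I \<subseteq> Inl ` {1..} \<union> Inr ` ({1..J} \<times> {1..})" by (auto simp: I_def)
    qed
    have tI: "t \<in> I \<rightarrow> I"
    proof
      fix i assume i: "i \<in> I"
      then consider (a) k where "i = Inl k" "k \<in> {1..n}" | (b) j k where "i = Inr (j, k)" "j \<in> {1..J}" "k \<in> {1..n}"
        by (auto simp: I_def)
      thus "t i \<in> I"
      proof cases
        case a
        hence "t i = Inl (n+1-k)" "n+1-k \<in> {1..n}" by (auto simp: t_def)
        thus ?thesis unfolding I_def by (intro UnI1 rev_image_eqI[of "n+1-k"]) auto
      next
        case b
        hence "t i = Inr (j, n+1-k)" "(j, n+1-k) \<in> {1..J} \<times> {1..n}" by (auto simp: t_def)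
        thus ?thesis unfolding I_def by (intro UnI2 rev_image_eqI[of "(j, n+1-k)"]) auto
      qed
    qed
    have tinj: "inj_on t I" by (auto simp: inj_on_def t_def I_def)
    have dist: "\<forall>i\<in>I. distr M borel (X (t i)) = distr M borel (X i)"
    proof
      fix i assume i: "i \<in> I"
      then consider (a) k where "i = Inl k" "k \<in> {1..n}" | (b) j k where "i = Inr (j, k)" "j \<in> {1..J}" "k \<in> {1..n}"
        by (auto simp: I_def)
      thus "distr M borel (X (t i)) = distr M borel (X i)"
      proof cases
        case a
        hence "X (t i) = U (n+1-k)" "X i = U k" "k \<ge> 1" "n+1-k \<ge> 1" by (auto simp: X_def t_def)
        thus ?thesis using U_id by metis
      next
        case b
        hence "X (t i) = V j (n+1-k)" "X i = V j k" "k \<ge> 1" "n+1-k \<ge> 1" "j \<in> {1..J}" by (auto simp: X_def t_def)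
        thus ?thesis using V_id by metis
      qed
    qed
    have ex: "(\<integral>\<^sup>+x. h (\<lambda>i\<in>I. X i x) \<partial>M) = (\<integral>\<^sup>+x. h (\<lambda>i\<in>I. X (t i) x) \<partial>M)"
      by (rule p.exch[OF I rv ind tI tinj dist]) (simp add: h_def h_meas)
    have e1: "(\<integral>\<^sup>+ x. ennreal (W n x) \<partial>M) = (\<integral>\<^sup>+x. h (\<lambda>i\<in>I. X i x) \<partial>M)"
      unfolding h_def W_def
      by (intro nn_integral_cong arg_cong[where f=ennreal] sojourn_cong) (auto simp: I_def X_def)
    have e2: "(\<integral>\<^sup>+x. h (\<lambda>i\<in>I. X (t i) x) \<partial>M) =
        (\<integral>\<^sup>+x. ennreal (sojourn J (\<lambda>k. U (n+1-k) x) (\<lambda>j k. V j (n+1-k) x) n) \<partial>M)"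
      unfolding h_def
      by (intro nn_integral_cong arg_cong[where f=ennreal] sojourn_cong) (auto simp: I_def X_def t_def)
    have e3: "(\<integral>\<^sup>+x. ennreal (sojourn J (\<lambda>k. U (n+1-k) x) (\<lambda>j k. V j (n+1-k) x) n) \<partial>M)
        \<le> (\<integral>\<^sup>+x. tandem_bound J lam \<rho> (\<Gamma> x) + ennreal (real J / lam) \<partial>M)"
    proof (rule nn_integral_mono_AE)
      show "AE x in M. ennreal (sojourn J (\<lambda>k. U (n+1-k) x) (\<lambda>j k. V j (n+1-k) x) n)
        \<le> tandem_bound J lam \<rho> (\<Gamma> x) + ennreal (real J / lam)"
        using AEU AEV
      proof eventually_elim
        case (elim x)
        show ?case
          using pathwise[where u="\<lambda>k. U k x" and v="\<lambda>j k. V j k x" and \<Gamma>="\<Gamma> x" and n=n,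
                 OF lam J mu sa ss rho' GU[of x] GV[of x] Gc[of x]] elim
          by (simp add: \<rho>_def \<mu>min_def)
      qed
    qed
    have e4: "(\<integral>\<^sup>+x. tandem_bound J lam \<rho> (\<Gamma> x) + ennreal (real J / lam) \<partial>M)
        = (\<integral>\<^sup>+ x. tandem_bound J lam \<rho> (\<Gamma> x) \<partial>M) + ennreal (real J / lam)"
      using TBmeas by (subst nn_integral_add) (auto simp: p.emeasure_space_1)
    show "(\<integral>\<^sup>+ x. ennreal (W n x) \<partial>M) \<le> (\<integral>\<^sup>+ x. tandem_bound J lam \<rho> (\<Gamma> x) \<partial>M) + ennreal (real J / lam)"
      using e1 ex e2 e3 e4 by simp
  qed
  show ?thesis
  proof (intro conjI part1 allI impI)
    fix N :: "'b measure" and Winf :: "'b \<Rightarrow> real"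
    assume lim: "(\<lambda>n. \<integral>\<^sup>+ x. ennreal (W n x) \<partial>M) \<longlonglongrightarrow> (\<integral>\<^sup>+ x. ennreal (Winf x) \<partial>N)"
    show "(\<integral>\<^sup>+ x. ennreal (Winf x) \<partial>N) \<le> (\<integral>\<^sup>+ x. tandem_bound J lam \<rho> (\<Gamma> x) \<partial>M) + ennreal (real J / lam)"
      using part1 by (intro LIMSEQ_le_const2[OF lim]) auto
  qed
qed

end
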